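(* Assume the standing assumptions and fix a function $h$ satisfying (h1)–(h4). Let $\tau=\min\{n\ge1:S_n\le0\}$ and suppose $\lim_{x\to\infty}\delta_\tau(x)=0$. Then for every stopping time $\sigma$ (with respect to an admissible filtration) with $\mathbf E\sigma<\infty$, we have $\lim_{x\to\infty}\delta_\sigma(x)=0$.
   Context: Standing assumptions: $\{\xi_n\}_{n\ge1}$ are i.i.d. real random variables with common distribution function $F$ and finite mean $\mathbf E\xi_1=-m<0$. $F$ is long-tailed: $\overline F(x)=1-F(x)>0$ for all $x$, and $\overline F(x-c)/\overline F(x)\to1$ as $x\to\infty$ for every fixed $c>0$. Notation: $S_0=0$ and $S_n=\sum_{i=1}^n\xi_i$. Admissible filtration: stopping times are taken with respect to a filtration $\{\mathcal F_n\}_{n\ge0}$ such that $\xi_n$ is $\mathcal F_n$-measurable and $\xi_{n+1}$ is independent of $\mathcal F_n$. The function $h:\mathbb R_+\to\mathbb R_+$ satisfies: - (h1) $h(x)\le x/2$; - (h2) $h(x)\to\infty$; - (h3) $\overline F(x-h(x))/\overline F(x)\to1$ as $x\to\infty$; - (h4) there exists $x_0$ with $h(x+t)\le h(x)+t$ for all $x\ge x_0$, $t\ge0$. For $x\ge0$, let $\mu(x)=\min\{n:S_n>x\}$, with $\min\emptyset=\infty$. For a stopping time $\sigma$, define $$A_{\sigma,2}(x)=\{\mu(x)\le\sigma,\ S_{\mu(x)-1}>h(x)\},\qquad \delta_\sigma(x)=\sup_{y\ge x}\frac{\mathbf P(A_{\sigma,2}(y))}{\overline F(y)}.$$ *)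

theory Defs
  imports "HOL-Probability.Probability"
begin

definition rw :: "(nat \<Rightarrow> 'a \<Rightarrow> real) \<Rightarrow> nat \<Rightarrow> 'a \<Rightarrow> real" where
  "rw \<xi> n \<omega> = (\<Sum>i\<in>{1..n}. \<xi> i \<omega>)"

definition Fbar :: "'a measure \<Rightarrow> (nat \<Rightarrow> 'a \<Rightarrow> real) \<Rightarrow> real \<Rightarrow> real" where
  "Fbar M \<xi> x = measure M {\<omega> \<in> space M. \<xi> 1 \<omega> > x}"

definition mu :: "(nat \<Rightarrow> 'a \<Rightarrow> real) \<Rightarrow> real \<Rightarrow> 'a \<Rightarrow> enat" where
  "mu \<xi> x \<omega> = (if \<exists>n. rw \<xi> n \<omega> > x then enat (LEAST n. rw \<xi> n \<omega> > x) else \<infinity>)"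

definition tau :: "(nat \<Rightarrow> 'a \<Rightarrow> real) \<Rightarrow> 'a \<Rightarrow> enat" where
  "tau \<xi> \<omega> = (if \<exists>n. n \<ge> 1 \<and> rw \<xi> n \<omega> \<le> 0
                 then enat (LEAST n. n \<ge> 1 \<and> rw \<xi> n \<omega> \<le> 0) else \<infinity>)"

definition A2 :: "'a measure \<Rightarrow> (nat \<Rightarrow> 'a \<Rightarrow> real) \<Rightarrow> (real \<Rightarrow> real) \<Rightarrow> ('a \<Rightarrow> enat)
    \<Rightarrow> real \<Rightarrow> 'a set" where
  "A2 M \<xi> h \<sigma> x = {\<omega> \<in> space M. \<exists>n. mu \<xi> x \<omega> = enat n \<and> enat n \<le> \<sigma> \<omega>
                                     \<and> rw \<xi> (n - 1) \<omega> > h x}"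

definition delta :: "'a measure \<Rightarrow> (nat \<Rightarrow> 'a \<Rightarrow> real) \<Rightarrow> (real \<Rightarrow> real) \<Rightarrow> ('a \<Rightarrow> enat)
    \<Rightarrow> real \<Rightarrow> ereal" where
  "delta M \<xi> h \<sigma> x = (SUP y\<in>{x..}. ereal (measure M (A2 M \<xi> h \<sigma> y) / Fbar M \<xi> y))"

definition admissible_filtration :: "'a measure \<Rightarrow> (nat \<Rightarrow> 'a \<Rightarrow> real) \<Rightarrow> (nat \<Rightarrow> 'a measure) \<Rightarrow> bool" where
  "admissible_filtration M \<xi> F \<longleftrightarrow>
     (\<forall>n. subalgebra M (F n)) \<and>
     (\<forall>n m. n \<le> m \<longrightarrow> sets (F n) \<subseteq> sets (F m)) \<and>
     (\<forall>n\<ge>1. \<xi> n \<in> borel_measurable (F n)) \<and>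
     (\<forall>n. prob_space.indep_set M (sets (F n))
             {\<xi> (Suc n) -` A \<inter> space M | A. A \<in> sets borel})"

definition stopping_time_enat :: "'a measure \<Rightarrow> (nat \<Rightarrow> 'a measure) \<Rightarrow> ('a \<Rightarrow> enat) \<Rightarrow> bool" where
  "stopping_time_enat M F \<sigma> \<longleftrightarrow> (\<forall>n::nat. {\<omega> \<in> space M. \<sigma> \<omega> \<le> enat n} \<in> sets (F n))"

end

theory Submission
  imports Defs
begin


fun V :: "real measure \<Rightarrow> nat \<Rightarrow> real \<Rightarrow> real \<Rightarrow> real \<Rightarrow> ennreal" where
  "V D 0 L H s = 0"
| "V D (Suc N) L H s = (\<integral>\<^sup>+y. (if L < s + y \<and> H < s then 1 else 0)
      + (if 0 < s + y \<and> s + y \<le> L then V D N L H (s + y) else 0) \<partial>D)"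

fun evp :: "(nat \<Rightarrow> 'a \<Rightarrow> real) \<Rightarrow> real \<Rightarrow> real \<Rightarrow> nat \<Rightarrow> nat \<Rightarrow> real \<Rightarrow> 'a \<Rightarrow> bool" where
  "evp \<xi> L H k 0 W \<omega> = False"
| "evp \<xi> L H k (Suc N) W \<omega> = ((L < W + \<xi> (Suc k) \<omega> \<and> H < W) \<or>
     (0 < W + \<xi> (Suc k) \<omega> \<and> W + \<xi> (Suc k) \<omega> \<le> L \<and> evp \<xi> L H (Suc k) N (W + \<xi> (Suc k) \<omega>) \<omega>))"

lemma V_meas0:
  assumes D: "sigma_finite_measure D" "sets D = sets borel"
  shows "(\<lambda>z::real\<times>real\<times>real. V D n (fst z) (fst (snd z)) (snd (snd z))) \<in> borel_measurable (borel \<Otimes>\<^sub>M (borel \<Otimes>\<^sub>M borel))"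
proof (induction n)
  case 0 then show ?case by simp
next
  case (Suc n)
  interpret D: sigma_finite_measure D by fact
  have sD[measurable_cong]: "sets D = sets borel" by fact
  have mp: "(\<lambda>p::(real\<times>real\<times>real)\<times>real. (fst (fst p), fst (snd (fst p)), snd (snd (fst p)) + snd p))
     \<in> measurable ((borel \<Otimes>\<^sub>M (borel \<Otimes>\<^sub>M borel)) \<Otimes>\<^sub>M D) (borel \<Otimes>\<^sub>M (borel \<Otimes>\<^sub>M borel))"
    by measurable
  have [measurable]: "(\<lambda>p::(real\<times>real\<times>real)\<times>real. V D n (fst (fst p)) (fst (snd (fst p))) (snd (snd (fst p)) + snd p))
     \<in> borel_measurable ((borel \<Otimes>\<^sub>M (borel \<Otimes>\<^sub>M borel)) \<Otimes>\<^sub>M D)"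
    using measurable_compose[OF mp Suc.IH] by simp
  show ?case
    by simp measurable
qed

lemma V_meas:
  assumes D: "sigma_finite_measure D" "sets D = sets borel"
    and "f \<in> borel_measurable N0" "g \<in> borel_measurable N0" "w \<in> borel_measurable N0"
  shows "(\<lambda>x. V D n (f x) (g x) (w x)) \<in> borel_measurable N0"
proof -
  have mp: "(\<lambda>x. (f x, g x, w x)) \<in> measurable N0 (borel \<Otimes>\<^sub>M (borel \<Otimes>\<^sub>M borel))"
    using assms(3-5) by measurable
  show ?thesis using measurable_compose[OF mp V_meas0[OF D, of n]] by simp
qed

lemma evp_meas:
  assumes "\<And>j. \<xi> (Suc j) \<in> borel_measurable N0"
  shows "Lf \<in> borel_measurable N0 \<Longrightarrow> Hf \<in> borel_measurable N0 \<Longrightarrow> Wf \<in> borel_measurable N0 \<Longrightarrow>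
    Measurable.pred N0 (\<lambda>\<omega>. evp \<xi> (Lf \<omega>) (Hf \<omega>) k N (Wf \<omega>) \<omega>)"
proof (induction N arbitrary: k Wf)
  case 0 then show ?case by simp
next
  case (Suc N)
  have m[measurable]: "Lf \<in> borel_measurable N0" "Hf \<in> borel_measurable N0" "Wf \<in> borel_measurable N0"
    "\<xi> (Suc k) \<in> borel_measurable N0" using Suc.prems assms by auto
  have [measurable]: "Measurable.pred N0 (\<lambda>\<omega>. evp \<xi> (Lf \<omega>) (Hf \<omega>) (Suc k) N (Wf \<omega> + \<xi> (Suc k) \<omega>) \<omega>)"
    by (rule Suc.IH) measurable
  show ?case by simp measurable
qed

lemma evp_mono: "evp \<xi> L H k N W \<omega> \<Longrightarrow> evp \<xi> L H k (Suc N) W \<omega>"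
  by (induction N arbitrary: k W) auto



locale rwsetup = prob_space M for M :: "'a measure" +
  fixes \<xi> :: "nat \<Rightarrow> 'a \<Rightarrow> real" and F :: "nat \<Rightarrow> 'a measure"
  assumes filt: "admissible_filtration M \<xi> F"
    and ident: "\<forall>n\<ge>1. distr M borel (\<xi> n) = distr M borel (\<xi> 1)"
begin

abbreviation "D \<equiv> distr M borel (\<xi> 1)"

lemma subF: "subalgebra M (F n)"
  using filt unfolding admissible_filtration_def by auto

lemma spaceF[simp]: "space (F n) = space M"
  using subF unfolding subalgebra_def by auto

lemma setsF: "sets (F n) \<subseteq> sets M"
  using subF unfolding subalgebra_def by auto

lemma setsF_mono: "n \<le> m \<Longrightarrow> sets (F n) \<subseteq> sets (F m)"
  using filt unfolding admissible_filtration_def by auto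

lemma meas_lift: "f \<in> measurable (F n) N \<Longrightarrow> n \<le> m \<Longrightarrow> f \<in> measurable (F m) N"
  by (rule measurable_from_subalg[of "F m" "F n"]) (auto simp: subalgebra_def setsF_mono)

lemma meas_M: "f \<in> measurable (F n) N \<Longrightarrow> f \<in> measurable M N"
  by (rule measurable_from_subalg[OF subF])

lemma xi_F: "1 \<le> n \<Longrightarrow> \<xi> n \<in> borel_measurable (F n)"
  using filt unfolding admissible_filtration_def by auto

lemma xi_Fm: "1 \<le> n \<Longrightarrow> n \<le> m \<Longrightarrow> \<xi> n \<in> borel_measurable (F m)"
  using xi_F meas_lift by blast

lemma xi_M: "1 \<le> n \<Longrightarrow> \<xi> n \<in> borel_measurable M"
  using xi_F meas_M by blast

lemma D_prob: "prob_space D"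
  by (rule prob_space_distr) (rule xi_M, simp)

lemma D_sets: "sets D = sets borel" by simp

lemma idm: "(\<lambda>\<omega>. \<omega>) \<in> measurable M (F k)"
  by (rule measurableI) (use setsF in \<open>auto dest: sets.sets_into_space\<close>)

lemma prod_eq: "distr M (F k) (\<lambda>\<omega>. \<omega>) \<Otimes>\<^sub>M D = distr M (F k \<Otimes>\<^sub>M borel) (\<lambda>\<omega>. (\<omega>, \<xi> (Suc k) \<omega>))"
proof -
  have ind: "indep_set (sets (F k)) {\<xi> (Suc k) -` A \<inter> space M | A. A \<in> sets borel}"
    using filt unfolding admissible_filtration_def by auto
  have ind2: "\<And>a b. a \<in> sets (F k) \<Longrightarrow> b \<in> {\<xi> (Suc k) -` A \<inter> space M | A. A \<in> sets borel} \<Longrightarrow> prob (a \<inter> b) = prob a * prob b"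
    using ind unfolding indep_sets2_eq by blast
  have Dk: "distr M borel (\<xi> (Suc k)) = D" using ident[rule_format, of "Suc k"] by simp
  have xm: "\<xi> (Suc k) \<in> borel_measurable M" by (rule xi_M) simp
  have pm: "(\<lambda>\<omega>. (\<omega>, \<xi> (Suc k) \<omega>)) \<in> measurable M (F k \<Otimes>\<^sub>M borel)"
    using idm xm by (intro measurable_Pair) auto
  interpret Mk: prob_space "distr M (F k) (\<lambda>\<omega>. \<omega>)" by (rule prob_space_distr[OF idm])
  interpret Dp: prob_space D by (rule D_prob)
  show ?thesis
  proof (rule pair_measure_eqI)
    show "sigma_finite_measure (distr M (F k) (\<lambda>\<omega>. \<omega>))" ..
    show "sigma_finite_measure D" ..
    show "sets (distr M (F k) (\<lambda>\<omega>. \<omega>) \<Otimes>\<^sub>M D) = sets (distr M (F k \<Otimes>\<^sub>M borel) (\<lambda>\<omega>. (\<omega>, \<xi> (Suc k) \<omega>)))"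
      by (simp cong: sets_pair_measure_cong)
    fix A B assume A: "A \<in> sets (distr M (F k) (\<lambda>\<omega>. \<omega>))" and B: "B \<in> sets D"
    have AF: "A \<in> sets (F k)" using A by simp
    have AM: "A \<in> sets M" using AF setsF by auto
    have As: "A \<inter> space M = A" using sets.sets_into_space[OF AM] by auto
    have Bb: "B \<in> sets borel" using B by simp
    have "emeasure (distr M (F k \<Otimes>\<^sub>M borel) (\<lambda>\<omega>. (\<omega>, \<xi> (Suc k) \<omega>))) (A \<times> B)
        = emeasure M ((\<lambda>\<omega>. (\<omega>, \<xi> (Suc k) \<omega>)) -` (A \<times> B) \<inter> space M)"
      using AF Bb by (intro emeasure_distr[OF pm]) auto
    also have "(\<lambda>\<omega>. (\<omega>, \<xi> (Suc k) \<omega>)) -` (A \<times> B) \<inter> space M = A \<inter> (\<xi> (Suc k) -` B \<inter> space M)"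
      using As by auto
    also have "emeasure M (A \<inter> (\<xi> (Suc k) -` B \<inter> space M)) = ennreal (prob A * prob (\<xi> (Suc k) -` B \<inter> space M))"
    proof -
      have "prob (A \<inter> (\<xi> (Suc k) -` B \<inter> space M)) = prob A * prob (\<xi> (Suc k) -` B \<inter> space M)"
        by (rule ind2) (use AF Bb in auto)
      then show ?thesis by (simp add: emeasure_eq_measure)
    qed
    also have "\<dots> = emeasure (distr M (F k) (\<lambda>\<omega>. \<omega>)) A * emeasure D B"
    proof -
      have e1: "emeasure (distr M (F k) (\<lambda>\<omega>. \<omega>)) A = emeasure M A"
        using emeasure_distr[OF idm AF] As by simp
      have e2: "emeasure D B = emeasure M (\<xi> (Suc k) -` B \<inter> space M)"
        using emeasure_distr[OF xm Bb] Dk by simp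
      show ?thesis unfolding e1 e2 by (simp add: emeasure_eq_measure ennreal_mult)
    qed
    finally show "emeasure (distr M (F k) (\<lambda>\<omega>. \<omega>)) A * emeasure D B =
        emeasure (distr M (F k \<Otimes>\<^sub>M borel) (\<lambda>\<omega>. (\<omega>, \<xi> (Suc k) \<omega>))) (A \<times> B)" by simp
  qed
qed

lemma onestep:
  assumes f: "f \<in> borel_measurable (F k \<Otimes>\<^sub>M borel)"
  shows "(\<integral>\<^sup>+\<omega>. f (\<omega>, \<xi> (Suc k) \<omega>) \<partial>M) = (\<integral>\<^sup>+\<omega>. (\<integral>\<^sup>+y. f (\<omega>, y) \<partial>D) \<partial>M)"
proof -
  let ?Mk = "distr M (F k) (\<lambda>\<omega>. \<omega>)"
  have Dk: "distr M borel (\<xi> (Suc k)) = D" using ident[rule_format, of "Suc k"] by simp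
  interpret Dp: prob_space D by (rule D_prob)
  have eq: "?Mk \<Otimes>\<^sub>M D = distr M (F k \<Otimes>\<^sub>M borel) (\<lambda>\<omega>. (\<omega>, \<xi> (Suc k) \<omega>))"
    by (rule prod_eq)
  have pm: "(\<lambda>\<omega>. (\<omega>, \<xi> (Suc k) \<omega>)) \<in> measurable M (F k \<Otimes>\<^sub>M borel)"
    using idm xi_M[of "Suc k"] by (intro measurable_Pair) auto
  have f2: "f \<in> borel_measurable (?Mk \<Otimes>\<^sub>M D)"
    using f by (subst measurable_cong_sets[OF sets_pair_measure_cong]) auto
  have "(\<integral>\<^sup>+\<omega>. f (\<omega>, \<xi> (Suc k) \<omega>) \<partial>M) = (\<integral>\<^sup>+z. f z \<partial>distr M (F k \<Otimes>\<^sub>M borel) (\<lambda>\<omega>. (\<omega>, \<xi> (Suc k) \<omega>)))"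
    using pm f by (subst nn_integral_distr) auto
  also have "\<dots> = (\<integral>\<^sup>+z. f z \<partial>(?Mk \<Otimes>\<^sub>M D))" by (simp only: eq)
  also have "\<dots> = (\<integral>\<^sup>+\<omega>. (\<integral>\<^sup>+y. f (\<omega>, y) \<partial>D) \<partial>?Mk)"
    by (rule Dp.nn_integral_fst[symmetric, OF f2])
  also have "\<dots> = (\<integral>\<^sup>+\<omega>. (\<integral>\<^sup>+y. f (\<omega>, y) \<partial>D) \<partial>M)"
  proof (rule nn_integral_distr[OF idm])
    show "(\<lambda>\<omega>. \<integral>\<^sup>+ y. f (\<omega>, y) \<partial>D) \<in> borel_measurable ?Mk"
      using Dp.borel_measurable_nn_integral_fst[OF f2] .
  qed
  finally show ?thesis .
qed

end


context rwsetup begin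

lemma D_sf: "sigma_finite_measure D"
  by (rule prob_space_imp_sigma_finite[OF D_prob])

lemma Vm: "f \<in> borel_measurable N0 \<Longrightarrow> g \<in> borel_measurable N0 \<Longrightarrow> w \<in> borel_measurable N0 \<Longrightarrow>
   (\<lambda>x. V D n (f x) (g x) (w x)) \<in> borel_measurable N0"
  by (rule V_meas[OF D_sf]) auto

lemma evpm: "Lf \<in> borel_measurable M \<Longrightarrow> Hf \<in> borel_measurable M \<Longrightarrow> Wf \<in> borel_measurable M \<Longrightarrow>
    Measurable.pred M (\<lambda>\<omega>. evp \<xi> (Lf \<omega>) (Hf \<omega>) k N (Wf \<omega>) \<omega>)"
  by (rule evp_meas) (auto intro: xi_M)

lemma markov:
  "G \<in> borel_measurable (F k) \<Longrightarrow> Lf \<in> borel_measurable (F k) \<Longrightarrow> Hf \<in> borel_measurable (F k) \<Longrightarrow>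
   Wf \<in> borel_measurable (F k) \<Longrightarrow>
   (\<integral>\<^sup>+\<omega>. G \<omega> * (if evp \<xi> (Lf \<omega>) (Hf \<omega>) k N (Wf \<omega>) \<omega> then 1 else 0) \<partial>M)
     = (\<integral>\<^sup>+\<omega>. G \<omega> * V D N (Lf \<omega>) (Hf \<omega>) (Wf \<omega>) \<partial>M)"
proof (induction N arbitrary: k G Wf)
  case 0 then show ?case by simp
next
  case (Suc N)
  note mk = Suc.prems
  have xk: "\<xi> (Suc k) \<in> borel_measurable (F (Suc k))" using xi_F[of "Suc k"] by simp
  have liftk: "f \<in> borel_measurable (F k) \<Longrightarrow> f \<in> borel_measurable (F (Suc k))" for f :: "'a \<Rightarrow> real"
    by (erule meas_lift) arith
  have liftk': "f \<in> borel_measurable (F k) \<Longrightarrow> f \<in> borel_measurable (F (Suc k))" for f :: "'a \<Rightarrow> ennreal"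
    by (erule meas_lift) arith
  have [measurable]: "Lf \<in> borel_measurable (F (Suc k))" by (rule liftk[OF mk(2)])
  have [measurable]: "Hf \<in> borel_measurable (F (Suc k))" by (rule liftk[OF mk(3)])
  have [measurable]: "Wf \<in> borel_measurable (F (Suc k))" by (rule liftk[OF mk(4)])
  have [measurable]: "G \<in> borel_measurable (F (Suc k))" by (rule liftk'[OF mk(1)])
  have [measurable]: "\<xi> (Suc k) \<in> borel_measurable (F (Suc k))" by (rule xk)
  have [measurable]: "Lf \<in> borel_measurable M" by (rule meas_M[OF mk(2)])
  have [measurable]: "Hf \<in> borel_measurable M" by (rule meas_M[OF mk(3)])
  have [measurable]: "Wf \<in> borel_measurable M" by (rule meas_M[OF mk(4)])
  have [measurable]: "G \<in> borel_measurable M" by (rule meas_M[OF mk(1)])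
  have [measurable]: "\<xi> (Suc k) \<in> borel_measurable M" by (rule xi_M) arith
  define C1 where "C1 \<omega> \<longleftrightarrow> Lf \<omega> < Wf \<omega> + \<xi> (Suc k) \<omega> \<and> Hf \<omega> < Wf \<omega>" for \<omega>
  define C2 where "C2 \<omega> \<longleftrightarrow> 0 < Wf \<omega> + \<xi> (Suc k) \<omega> \<and> Wf \<omega> + \<xi> (Suc k) \<omega> \<le> Lf \<omega>" for \<omega>
  define G' where "G' \<omega> = G \<omega> * (if C2 \<omega> then 1 else 0)" for \<omega>
  define W' where "W' \<omega> = Wf \<omega> + \<xi> (Suc k) \<omega>" for \<omega>
  have [measurable]: "G' \<in> borel_measurable (F (Suc k))" "W' \<in> borel_measurable (F (Suc k))"
    unfolding G'_def W'_def C2_def by measurable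
  have [measurable]: "G' \<in> borel_measurable M" "W' \<in> borel_measurable M"
    unfolding G'_def W'_def C2_def by measurable
  have [measurable]: "Measurable.pred M C1" "Measurable.pred M C2"
    unfolding C1_def C2_def by measurable
  have [measurable]: "Measurable.pred M (\<lambda>\<omega>. evp \<xi> (Lf \<omega>) (Hf \<omega>) (Suc k) N (W' \<omega>) \<omega>)"
    by (rule evpm) measurable
  have VW[measurable]: "(\<lambda>\<omega>. V D N (Lf \<omega>) (Hf \<omega>) (W' \<omega>)) \<in> borel_measurable M"
    by (rule Vm) measurable
  have IH: "(\<integral>\<^sup>+\<omega>. G' \<omega> * (if evp \<xi> (Lf \<omega>) (Hf \<omega>) (Suc k) N (W' \<omega>) \<omega> then 1 else 0) \<partial>M)
     = (\<integral>\<^sup>+\<omega>. G' \<omega> * V D N (Lf \<omega>) (Hf \<omega>) (W' \<omega>) \<partial>M)"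
    by (rule Suc.IH) measurable
  define g where "g z = G (fst z) * ((if Lf (fst z) < Wf (fst z) + snd z \<and> Hf (fst z) < Wf (fst z) then 1 else 0)
      + (if 0 < Wf (fst z) + snd z \<and> Wf (fst z) + snd z \<le> Lf (fst z)
         then V D N (Lf (fst z)) (Hf (fst z)) (Wf (fst z) + snd z) else 0))" for z
  have [measurable]: "(\<lambda>z. V D N (Lf (fst z)) (Hf (fst z)) (Wf (fst z) + snd z)) \<in> borel_measurable (F k \<Otimes>\<^sub>M borel)"
    by (rule Vm) (use mk in measurable)
  have gm: "g \<in> borel_measurable (F k \<Otimes>\<^sub>M borel)"
    unfolding g_def using mk by measurable
  have "(\<integral>\<^sup>+\<omega>. G \<omega> * (if evp \<xi> (Lf \<omega>) (Hf \<omega>) k (Suc N) (Wf \<omega>) \<omega> then 1 else 0) \<partial>M)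
      = (\<integral>\<^sup>+\<omega>. G \<omega> * (if C1 \<omega> then 1 else 0)
          + G' \<omega> * (if evp \<xi> (Lf \<omega>) (Hf \<omega>) (Suc k) N (W' \<omega>) \<omega> then 1 else 0) \<partial>M)"
    by (rule nn_integral_cong) (auto simp: C1_def C2_def G'_def W'_def)
  also have "\<dots> = (\<integral>\<^sup>+\<omega>. G \<omega> * (if C1 \<omega> then 1 else 0) \<partial>M)
          + (\<integral>\<^sup>+\<omega>. G' \<omega> * (if evp \<xi> (Lf \<omega>) (Hf \<omega>) (Suc k) N (W' \<omega>) \<omega> then 1 else 0) \<partial>M)"
    by (rule nn_integral_add) measurable
  also have "\<dots> = (\<integral>\<^sup>+\<omega>. G \<omega> * (if C1 \<omega> then 1 else 0) \<partial>M)
          + (\<integral>\<^sup>+\<omega>. G' \<omega> * V D N (Lf \<omega>) (Hf \<omega>) (W' \<omega>) \<partial>M)"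
    by (simp only: IH)
  also have "\<dots> = (\<integral>\<^sup>+\<omega>. G \<omega> * (if C1 \<omega> then 1 else 0) + G' \<omega> * V D N (Lf \<omega>) (Hf \<omega>) (W' \<omega>) \<partial>M)"
    by (rule nn_integral_add[symmetric]) measurable
  also have "\<dots> = (\<integral>\<^sup>+\<omega>. g (\<omega>, \<xi> (Suc k) \<omega>) \<partial>M)"
    by (rule nn_integral_cong) (auto simp: g_def C1_def C2_def G'_def W'_def distrib_left)
  also have "\<dots> = (\<integral>\<^sup>+\<omega>. (\<integral>\<^sup>+y. g (\<omega>, y) \<partial>D) \<partial>M)"
    by (rule onestep[OF gm])
  also have "\<dots> = (\<integral>\<^sup>+\<omega>. G \<omega> * V D (Suc N) (Lf \<omega>) (Hf \<omega>) (Wf \<omega>) \<partial>M)"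
  proof (rule nn_integral_cong)
    fix \<omega> assume \<omega>: "\<omega> \<in> space M"
    have m1: "(\<lambda>y. (if Lf \<omega> < Wf \<omega> + y \<and> Hf \<omega> < Wf \<omega> then 1 else 0)
      + (if 0 < Wf \<omega> + y \<and> Wf \<omega> + y \<le> Lf \<omega> then V D N (Lf \<omega>) (Hf \<omega>) (Wf \<omega> + y) else 0)) \<in> borel_measurable D"
    proof -
      have [measurable]: "(\<lambda>y. V D N (Lf \<omega>) (Hf \<omega>) (Wf \<omega> + y)) \<in> borel_measurable borel"
        by (rule Vm) measurable
      show ?thesis by simp measurable
    qed
    show "(\<integral>\<^sup>+y. g (\<omega>, y) \<partial>D) = G \<omega> * V D (Suc N) (Lf \<omega>) (Hf \<omega>) (Wf \<omega>)"
      unfolding g_def fst_conv snd_conv V.simps by (rule nn_integral_cmult[OF m1])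
  qed
  finally show ?case .
qed

end


lemma rw_0[simp]: "rw \<xi> 0 \<omega> = 0"
  by (simp add: rw_def)

lemma rw_Suc: "rw \<xi> (Suc n) \<omega> = rw \<xi> n \<omega> + \<xi> (Suc n) \<omega>"
  by (simp add: rw_def)

definition T :: "(nat \<Rightarrow> 'a \<Rightarrow> real) \<Rightarrow> nat \<Rightarrow> nat \<Rightarrow> 'a \<Rightarrow> real" where
  "T \<xi> k i \<omega> = rw \<xi> (k + i) \<omega> - rw \<xi> k \<omega>"

lemma T_0[simp]: "T \<xi> k 0 \<omega> = 0" by (simp add: T_def)

lemma T_Suc: "T \<xi> k (Suc i) \<omega> = \<xi> (Suc k) \<omega> + T \<xi> (Suc k) i \<omega>"
  unfolding T_def
  by (simp add: rw_Suc)

definition pathp :: "(nat \<Rightarrow> 'a \<Rightarrow> real) \<Rightarrow> real \<Rightarrow> real \<Rightarrow> nat \<Rightarrow> real \<Rightarrow> nat \<Rightarrow> 'a \<Rightarrow> bool" where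
  "pathp \<xi> L H k W m \<omega> \<longleftrightarrow> 1 \<le> m \<and> (\<forall>i. 1 \<le> i \<and> i < m \<longrightarrow> 0 < W + T \<xi> k i \<omega> \<and> W + T \<xi> k i \<omega> \<le> L)
     \<and> L < W + T \<xi> k m \<omega> \<and> H < W + T \<xi> k (m - 1) \<omega>"

lemma pathp_1: "pathp \<xi> L H k W 1 \<omega> \<longleftrightarrow> L < W + \<xi> (Suc k) \<omega> \<and> H < W"
  unfolding pathp_def by (simp add: T_Suc[of _ _ 0, simplified])

lemma pathp_Suc:
  assumes "1 \<le> m"
  shows "pathp \<xi> L H k W (Suc m) \<omega> \<longleftrightarrow>
    (0 < W + \<xi> (Suc k) \<omega> \<and> W + \<xi> (Suc k) \<omega> \<le> L \<and> pathp \<xi> L H (Suc k) (W + \<xi> (Suc k) \<omega>) m \<omega>)"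
proof -
  obtain m' where m': "m = Suc m'" using assms by (cases m) auto
  have t1: "T \<xi> k 1 \<omega> = \<xi> (Suc k) \<omega>" using T_Suc[of \<xi> k 0 \<omega>] by simp
  have A: "(\<forall>i. 1 \<le> i \<and> i < Suc m \<longrightarrow> 0 < W + T \<xi> k i \<omega> \<and> W + T \<xi> k i \<omega> \<le> L) \<longleftrightarrow>
     (0 < W + \<xi> (Suc k) \<omega> \<and> W + \<xi> (Suc k) \<omega> \<le> L) \<and>
     (\<forall>i. 1 \<le> i \<and> i < m \<longrightarrow> 0 < W + \<xi> (Suc k) \<omega> + T \<xi> (Suc k) i \<omega> \<and> W + \<xi> (Suc k) \<omega> + T \<xi> (Suc k) i \<omega> \<le> L)"
  proof safe
    fix i assume H: "\<forall>i. 1 \<le> i \<and> i < Suc m \<longrightarrow> 0 < W + T \<xi> k i \<omega> \<and> W + T \<xi> k i \<omega> \<le> L"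
    show "0 < W + \<xi> (Suc k) \<omega>" "W + \<xi> (Suc k) \<omega> \<le> L" using H[rule_format, of 1] t1 assms by auto
    assume "1 \<le> i" "i < m"
    then show "0 < W + \<xi> (Suc k) \<omega> + T \<xi> (Suc k) i \<omega>" "W + \<xi> (Suc k) \<omega> + T \<xi> (Suc k) i \<omega> \<le> L"
      using H[rule_format, of "Suc i"] by (auto simp: T_Suc add.assoc)
  next
    fix i assume H1: "0 < W + \<xi> (Suc k) \<omega>" "W + \<xi> (Suc k) \<omega> \<le> L"
      and H: "\<forall>i. 1 \<le> i \<and> i < m \<longrightarrow> 0 < W + \<xi> (Suc k) \<omega> + T \<xi> (Suc k) i \<omega> \<and> W + \<xi> (Suc k) \<omega> + T \<xi> (Suc k) i \<omega> \<le> L"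
      and i: "1 \<le> i" "i < Suc m"
    obtain i' where i': "i = Suc i'" using i by (cases i) auto
    have "0 < W + T \<xi> k i \<omega> \<and> W + T \<xi> k i \<omega> \<le> L"
    proof (cases "i' = 0")
      case True then show ?thesis using i' t1 H1 by auto
    next
      case False then show ?thesis
        using i' H[rule_format, of i'] i by (auto simp: T_Suc add.assoc)
    qed
    then show "0 < W + T \<xi> k i \<omega>" "W + T \<xi> k i \<omega> \<le> L" by auto
  qed
  have B: "T \<xi> k (Suc m) \<omega> = \<xi> (Suc k) \<omega> + T \<xi> (Suc k) m \<omega>" by (rule T_Suc)
  have C: "T \<xi> k (Suc m - 1) \<omega> = \<xi> (Suc k) \<omega> + T \<xi> (Suc k) (m - 1) \<omega>"
    using T_Suc[of \<xi> k m' \<omega>] m' by simp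
  show ?thesis
    unfolding pathp_def A B C using assms by (auto simp: add.assoc)
qed

lemma evp_iff: "evp \<xi> L H k N W \<omega> \<longleftrightarrow> (\<exists>m. m \<le> N \<and> pathp \<xi> L H k W m \<omega>)"
proof (induction N arbitrary: k W)
  case 0 then show ?case by (auto simp: pathp_def)
next
  case (Suc N)
  show ?case
  proof
    assume "evp \<xi> L H k (Suc N) W \<omega>"
    then consider "L < W + \<xi> (Suc k) \<omega> \<and> H < W"
      | "0 < W + \<xi> (Suc k) \<omega> \<and> W + \<xi> (Suc k) \<omega> \<le> L \<and> evp \<xi> L H (Suc k) N (W + \<xi> (Suc k) \<omega>) \<omega>"
      by auto
    then show "\<exists>m. m \<le> Suc N \<and> pathp \<xi> L H k W m \<omega>"
    proof cases
      case 1 then have "pathp \<xi> L H k W 1 \<omega>" using pathp_1[of \<xi> L H k W \<omega>] by (rule iffD2[rotated])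
      then show ?thesis by (intro exI[of _ 1]) auto
    next
      case 2
      then obtain m where m: "m \<le> N" "pathp \<xi> L H (Suc k) (W + \<xi> (Suc k) \<omega>) m \<omega>" using Suc.IH by auto
      then have "1 \<le> m" by (simp add: pathp_def)
      then show ?thesis using m 2 pathp_Suc[of m \<xi> L H k W \<omega>] by (intro exI[of _ "Suc m"]) auto
    qed
  next
    assume "\<exists>m. m \<le> Suc N \<and> pathp \<xi> L H k W m \<omega>"
    then obtain m where m: "m \<le> Suc N" "pathp \<xi> L H k W m \<omega>" by auto
    then have m1: "1 \<le> m" by (simp add: pathp_def)
    show "evp \<xi> L H k (Suc N) W \<omega>"
    proof (cases "m = 1")
      case True then have "pathp \<xi> L H k W 1 \<omega>" using m by simp
      then have "L < W + \<xi> (Suc k) \<omega> \<and> H < W" using pathp_1[of \<xi> L H k W \<omega>] by (rule iffD1[rotated])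
      then show ?thesis by simp
    next
      case False
      then obtain m' where m': "m = Suc m'" "1 \<le> m'" using m1 by (cases m) auto
      then have "0 < W + \<xi> (Suc k) \<omega> \<and> W + \<xi> (Suc k) \<omega> \<le> L \<and> pathp \<xi> L H (Suc k) (W + \<xi> (Suc k) \<omega>) m' \<omega>"
        using m pathp_Suc[of m' \<xi> L H k W \<omega>] by auto
      moreover have "m' \<le> N" using m m' by auto
      ultimately show ?thesis using Suc.IH by auto
    qed
  qed
qed

lemma mu_eq: "mu \<xi> x \<omega> = enat n \<longleftrightarrow> (\<forall>i<n. rw \<xi> i \<omega> \<le> x) \<and> x < rw \<xi> n \<omega>"
proof
  assume a: "mu \<xi> x \<omega> = enat n"
  then have ex: "\<exists>n. rw \<xi> n \<omega> > x" by (auto simp: mu_def split: if_splits)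
  then have n: "n = (LEAST n. rw \<xi> n \<omega> > x)" using a by (simp add: mu_def)
  show "(\<forall>i<n. rw \<xi> i \<omega> \<le> x) \<and> x < rw \<xi> n \<omega>"
    using n LeastI_ex[OF ex] not_less_Least[of _ "\<lambda>n. rw \<xi> n \<omega> > x"] by (auto simp: not_less)
next
  assume a: "(\<forall>i<n. rw \<xi> i \<omega> \<le> x) \<and> x < rw \<xi> n \<omega>"
  then have "(LEAST n. rw \<xi> n \<omega> > x) = n"
    by (intro Least_equality) (auto simp: not_less[symmetric])
  then show "mu \<xi> x \<omega> = enat n" using a by (auto simp: mu_def)
qed

lemma tau_ge: "enat n \<le> tau \<xi> \<omega> \<longleftrightarrow> (\<forall>i. 1 \<le> i \<and> i < n \<longrightarrow> 0 < rw \<xi> i \<omega>)"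
proof (cases "\<exists>n. n \<ge> 1 \<and> rw \<xi> n \<omega> \<le> 0")
  case True
  let ?l = "LEAST n. n \<ge> 1 \<and> rw \<xi> n \<omega> \<le> 0"
  have l: "?l \<ge> 1" "rw \<xi> ?l \<omega> \<le> 0" using LeastI_ex[OF True] by auto
  have nl: "\<And>j. j < ?l \<Longrightarrow> \<not> (j \<ge> 1 \<and> rw \<xi> j \<omega> \<le> 0)" by (rule not_less_Least)
  show ?thesis
  proof
    assume "enat n \<le> tau \<xi> \<omega>"
    then have nle: "n \<le> ?l" using True by (simp add: tau_def)
    show "\<forall>i. 1 \<le> i \<and> i < n \<longrightarrow> 0 < rw \<xi> i \<omega>"
    proof (intro allI impI)
      fix i assume i: "1 \<le> i \<and> i < n"
      then have "i < ?l" using nle by auto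
      then show "0 < rw \<xi> i \<omega>" using nl[of i] i by auto
    qed
  next
    assume H: "\<forall>i. 1 \<le> i \<and> i < n \<longrightarrow> 0 < rw \<xi> i \<omega>"
    have "n \<le> ?l" using H[rule_format, of ?l] l by (cases "?l < n") auto
    then show "enat n \<le> tau \<xi> \<omega>" using True by (simp add: tau_def)
  qed
next
  case False
  have t: "tau \<xi> \<omega> = \<infinity>" using False by (simp add: tau_def)
  have "\<forall>i. 1 \<le> i \<and> i < n \<longrightarrow> 0 < rw \<xi> i \<omega>"
  proof (intro allI impI)
    fix i assume i: "1 \<le> i \<and> i < n"
    show "0 < rw \<xi> i \<omega>"
    proof (rule ccontr)
      assume "\<not> 0 < rw \<xi> i \<omega>"
      then have "1 \<le> i \<and> rw \<xi> i \<omega> \<le> 0" using i by simp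
      then show False using False by blast
    qed
  qed
  then show ?thesis using t by simp
qed



lemma T0: "T \<xi> 0 i \<omega> = rw \<xi> i \<omega>" by (simp add: T_def)

lemma evp0_A2:
  assumes L: "0 \<le> L" and H: "h L \<le> H" and \<omega>: "\<omega> \<in> space M" and e: "evp \<xi> L H 0 K 0 \<omega>"
  shows "\<omega> \<in> A2 M \<xi> h (tau \<xi>) L"
proof -
  obtain m where m: "m \<le> K" "pathp \<xi> L H 0 0 m \<omega>" using e evp_iff by metis
  have p: "1 \<le> m" "\<And>i. 1 \<le> i \<Longrightarrow> i < m \<Longrightarrow> 0 < rw \<xi> i \<omega> \<and> rw \<xi> i \<omega> \<le> L"
     "L < rw \<xi> m \<omega>" "H < rw \<xi> (m - 1) \<omega>"
    using m(2) unfolding pathp_def T0 by auto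
  have "\<forall>i<m. rw \<xi> i \<omega> \<le> L"
  proof (intro allI impI)
    fix i assume "i < m"
    then show "rw \<xi> i \<omega> \<le> L" using p(2)[of i] L by (cases "i = 0") auto
  qed
  then have mu: "mu \<xi> L \<omega> = enat m" using p(3) mu_eq by metis
  have ta: "enat m \<le> tau \<xi> \<omega>" using p(2) tau_ge by metis
  show ?thesis unfolding A2_def using \<omega> mu ta p(4) H by auto
qed

lemma decomp:
  assumes y: "0 \<le> y" and mu: "mu \<xi> y \<omega> = enat n" and s: "enat n \<le> \<sigma> \<omega>"
    and hy: "h y < rw \<xi> (n - 1) \<omega>"
  shows "\<exists>k<n. enat k < \<sigma> \<omega> \<and> (\<forall>l\<le>k. rw \<xi> k \<omega> \<le> rw \<xi> l \<omega>)
           \<and> pathp \<xi> (y - rw \<xi> k \<omega>) (h y - rw \<xi> k \<omega>) k 0 (n - k) \<omega>"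
proof -
  have bel: "\<forall>i<n. rw \<xi> i \<omega> \<le> y" and ab: "y < rw \<xi> n \<omega>" using mu mu_eq by metis+
  have n0: "n \<noteq> 0" using ab y by (cases "n = 0") auto
  define P where "P i \<longleftrightarrow> i < n \<and> (\<forall>l<n. rw \<xi> i \<omega> \<le> rw \<xi> l \<omega>)" for i
  let ?S = "(\<lambda>i. rw \<xi> i \<omega>) ` {..<n}"
  have fin: "finite ?S" and ne: "?S \<noteq> {}" using n0 by auto
  obtain i0 where i0: "i0 < n" "rw \<xi> i0 \<omega> = Min ?S" using Min_in[OF fin ne] by auto
  have "P i0" unfolding P_def using i0 Min_le[OF fin] by auto
  define k where "k = Greatest P"
  have Pk: "P k" unfolding k_def by (rule GreatestI_nat[of P i0 n]) (use \<open>P i0\<close> in \<open>auto simp: P_def\<close>)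
  have kmax: "\<And>j. P j \<Longrightarrow> j \<le> k" unfolding k_def
    by (rule Greatest_le_nat[of P _ n]) (auto simp: P_def)
  have kn: "k < n" using Pk by (simp add: P_def)
  have gt: "\<And>j. k < j \<Longrightarrow> j < n \<Longrightarrow> rw \<xi> k \<omega> < rw \<xi> j \<omega>"
  proof -
    fix j assume j: "k < j" "j < n"
    have "\<not> P j" using kmax[of j] j by auto
    then obtain l where l: "l < n" "rw \<xi> l \<omega> < rw \<xi> j \<omega>" using j unfolding P_def by (auto simp: not_le)
    have "rw \<xi> k \<omega> \<le> rw \<xi> l \<omega>" using Pk l unfolding P_def by auto
    then show "rw \<xi> k \<omega> < rw \<xi> j \<omega>" using l by simp
  qed
  have pa: "pathp \<xi> (y - rw \<xi> k \<omega>) (h y - rw \<xi> k \<omega>) k 0 (n - k) \<omega>"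
    unfolding pathp_def T_def
  proof (intro conjI allI impI)
    show "1 \<le> n - k" using kn by simp
    fix i assume i: "1 \<le> i \<and> i < n - k"
    show "0 < 0 + (rw \<xi> (k + i) \<omega> - rw \<xi> k \<omega>)" using gt[of "k + i"] i by auto
    show "0 + (rw \<xi> (k + i) \<omega> - rw \<xi> k \<omega>) \<le> y - rw \<xi> k \<omega>" using bel i by auto
  next
    show "y - rw \<xi> k \<omega> < 0 + (rw \<xi> (k + (n - k)) \<omega> - rw \<xi> k \<omega>)" using ab kn by simp
    show "h y - rw \<xi> k \<omega> < 0 + (rw \<xi> (k + (n - k - 1)) \<omega> - rw \<xi> k \<omega>)"
      using hy kn by (simp add: Suc_leI)
  qed
  have sk: "enat k < \<sigma> \<omega>" using kn s by (meson enat_ord_simps(2) less_le_trans)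
  have lad: "\<forall>l\<le>k. rw \<xi> k \<omega> \<le> rw \<xi> l \<omega>" using Pk kn unfolding P_def by auto
  show ?thesis using kn sk lad pa by blast
qed



lemma sum_count: "(\<Sum>k<K. if k < s then 1 else (0::ennreal)) = of_nat (min K s)"
proof (induction K)
  case 0 then show ?case by simp
next
  case (Suc K)
  show ?case
  proof (cases "K < s")
    case True
    then have "min (Suc K) s = Suc (min K s)" by simp
    then show ?thesis using Suc True by simp
  next
    case False
    then have "min (Suc K) s = min K s" by simp
    then show ?thesis using Suc False by simp
  qed
qed

context rwsetup begin

lemma rw_F: "i \<le> k \<Longrightarrow> rw \<xi> i \<in> borel_measurable (F k)"
proof -
  assume ik: "i \<le> k"
  have e: "rw \<xi> i = (\<lambda>\<omega>. \<Sum>j\<in>{1..i}. \<xi> j \<omega>)" by (rule ext) (simp add: rw_def)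
  show ?thesis unfolding e
  proof (rule borel_measurable_sum)
    fix j assume "j \<in> {1..i}"
    then have "1 \<le> j" "j \<le> k" using ik by auto
    then show "\<xi> j \<in> borel_measurable (F k)" by (rule xi_Fm)
  qed
qed

lemma rw_M[measurable]: "rw \<xi> i \<in> borel_measurable M"
  by (rule meas_M[OF rw_F[OF order_refl]])

lemma A2tau_sets: "A2 M \<xi> h (tau \<xi>) L \<in> sets M"
proof -
  have "A2 M \<xi> h (tau \<xi>) L = {\<omega>\<in>space M. \<exists>n. ((\<forall>i<n. rw \<xi> i \<omega> \<le> L) \<and> L < rw \<xi> n \<omega>)
      \<and> (\<forall>i. 1 \<le> i \<and> i < n \<longrightarrow> 0 < rw \<xi> i \<omega>) \<and> h L < rw \<xi> (n - 1) \<omega>}"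
    unfolding A2_def mu_eq[symmetric] tau_ge[symmetric] by (rule refl)
  also have "\<dots> \<in> sets M" by measurable
  finally show ?thesis .
qed

lemma xi1_M[measurable]: "\<xi> 1 \<in> borel_measurable M" by (rule xi_M) (rule order_refl)

lemma Fbar_mono: "y \<le> L \<Longrightarrow> Fbar M \<xi> L \<le> Fbar M \<xi> y"
  unfolding Fbar_def
proof (rule finite_measure_mono)
  assume "y \<le> L"
  then show "{\<omega> \<in> space M. L < \<xi> 1 \<omega>} \<subseteq> {\<omega> \<in> space M. y < \<xi> 1 \<omega>}" by auto
  show "{\<omega> \<in> space M. y < \<xi> 1 \<omega>} \<in> events" by measurable
qed

lemma Vbound:
  assumes L: "0 \<le> L" and H: "h L \<le> H"
  shows "V D K L H 0 \<le> emeasure M (A2 M \<xi> h (tau \<xi>) L)"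
proof -
  have c0: "(\<lambda>_. c) \<in> borel_measurable (F 0)" for c :: real by simp
  have c1: "(\<lambda>_. 1) \<in> borel_measurable (F 0)" by simp
  have "(\<integral>\<^sup>+\<omega>. 1 * (if evp \<xi> L H 0 K 0 \<omega> then 1 else 0) \<partial>M) = (\<integral>\<^sup>+\<omega>. 1 * V D K L H 0 \<partial>M)"
    by (rule markov[where G="\<lambda>_. 1" and Lf="\<lambda>_. L" and Hf="\<lambda>_. H" and Wf="\<lambda>_. 0" and k=0 and N=K, OF c1 c0 c0 c0])
  then have eq: "(\<integral>\<^sup>+\<omega>. indicator {\<omega>\<in>space M. evp \<xi> L H 0 K 0 \<omega>} \<omega> \<partial>M) = V D K L H 0"
    by (simp add: indicator_def of_bool_def emeasure_space_1 cong: nn_integral_cong_simp)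
  have em: "{\<omega>\<in>space M. evp \<xi> L H 0 K 0 \<omega>} \<in> sets M"
    using evpm[of "\<lambda>_. L" "\<lambda>_. H" "\<lambda>_. 0" 0 K] by (simp add: pred_def)
  have "V D K L H 0 = emeasure M {\<omega>\<in>space M. evp \<xi> L H 0 K 0 \<omega>}"
    using eq em by simp
  also have "\<dots> \<le> emeasure M (A2 M \<xi> h (tau \<xi>) L)"
    by (rule emeasure_mono[OF _ A2tau_sets]) (use evp0_A2[where h=h and L=L and H=H and M=M and \<xi>=\<xi> and K=K, OF L H] in blast)
  finally show ?thesis .
qed

end


context rwsetup begin

lemma per_y:
  fixes \<sigma> :: "'a \<Rightarrow> enat" and h :: "real \<Rightarrow> real"
  assumes stop: "stopping_time_enat M F \<sigma>"
    and fm: "(\<integral>\<^sup>+\<omega>. ennreal_of_enat (\<sigma> \<omega>) \<partial>M) = ennreal Er" and Er: "0 \<le> Er"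
    and h4: "\<forall>x\<ge>x0. \<forall>t\<ge>0. h (x + t) \<le> h x + t"
    and y: "x0 \<le> y" "0 \<le> y"
    and d: "0 \<le> d" "\<And>L. y \<le> L \<Longrightarrow> measure M (A2 M \<xi> h (tau \<xi>) L) \<le> d * Fbar M \<xi> L"
  shows "measure M (A2 M \<xi> h \<sigma> y) \<le> d * Fbar M \<xi> y * Er"
proof -
  define c where "c = d * Fbar M \<xi> y"
  have c0: "0 \<le> c" unfolding c_def using d(1) by (simp add: Fbar_def)
  define Bs where "Bs k = {\<omega>\<in>space M. enat k < \<sigma> \<omega> \<and> (\<forall>l\<le>k. rw \<xi> k \<omega> \<le> rw \<xi> l \<omega>)}" for k
  define Sk where "Sk k = {\<omega>\<in>space M. enat k < \<sigma> \<omega>}" for k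
  define Es where "Es k K = {\<omega>\<in>space M. evp \<xi> (y - rw \<xi> k \<omega>) (h y - rw \<xi> k \<omega>) k K 0 \<omega>}" for k K
  define U where "U K = (\<Union>k<K. Bs k \<inter> Es k K)" for K
  have Sk_F: "Sk k \<in> sets (F k)" for k
  proof -
    have "{\<omega>\<in>space M. \<sigma> \<omega> \<le> enat k} \<in> sets (F k)" using stop unfolding stopping_time_enat_def by blast
    then have "space (F k) - {\<omega>\<in>space M. \<sigma> \<omega> \<le> enat k} \<in> sets (F k)" by (rule sets.compl_sets)
    moreover have "space (F k) - {\<omega>\<in>space M. \<sigma> \<omega> \<le> enat k} = Sk k" unfolding Sk_def by (auto simp: not_le)
    ultimately show ?thesis by metis
  qed
  have Bs_F: "Bs k \<in> sets (F k)" for k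
  proof -
    have P: "Measurable.pred (F k) (\<lambda>\<omega>. \<forall>l\<in>{..k}. rw \<xi> k \<omega> \<le> rw \<xi> l \<omega>)"
    proof (rule pred_intros_countable_bounded(3))
      fix l assume lk: "l \<in> {..k}"
      have [measurable]: "rw \<xi> l \<in> borel_measurable (F k)" by (rule rw_F) (use lk in simp)
      have [measurable]: "rw \<xi> k \<in> borel_measurable (F k)" by (rule rw_F) simp
      show "Measurable.pred (F k) (\<lambda>\<omega>. rw \<xi> k \<omega> \<le> rw \<xi> l \<omega>)" by measurable
    qed
    have eqs: "{\<omega>\<in>space (F k). \<forall>l\<in>{..k}. rw \<xi> k \<omega> \<le> rw \<xi> l \<omega>} = {\<omega>\<in>space M. \<forall>l\<le>k. rw \<xi> k \<omega> \<le> rw \<xi> l \<omega>}"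
      by auto
    have L: "{\<omega>\<in>space M. \<forall>l\<le>k. rw \<xi> k \<omega> \<le> rw \<xi> l \<omega>} \<in> sets (F k)"
      using P unfolding pred_def eqs .
    have "Bs k = Sk k \<inter> {\<omega>\<in>space M. \<forall>l\<le>k. rw \<xi> k \<omega> \<le> rw \<xi> l \<omega>}" unfolding Bs_def Sk_def by auto
    then show ?thesis using sets.Int[OF Sk_F[of k] L] by metis
  qed
  have Bs_M: "Bs k \<in> sets M" for k by (rule subsetD[OF setsF Bs_F])
  have Sk_M: "Sk k \<in> sets M" for k by (rule subsetD[OF setsF Sk_F])
  have Es_M: "Es k K \<in> sets M" for k K
  proof -
    have "Measurable.pred M (\<lambda>\<omega>. evp \<xi> (y - rw \<xi> k \<omega>) (h y - rw \<xi> k \<omega>) k K 0 \<omega>)"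
    proof -
      have m1: "(\<lambda>\<omega>. y - rw \<xi> k \<omega>) \<in> borel_measurable M" by measurable
      have m2: "(\<lambda>\<omega>. h y - rw \<xi> k \<omega>) \<in> borel_measurable M" by measurable
      have m3: "(\<lambda>\<omega>. 0::real) \<in> borel_measurable M" by measurable
      show ?thesis by (rule evpm[OF m1 m2 m3])
    qed
    then show ?thesis unfolding Es_def pred_def .
  qed
  have BE_M: "Bs k \<inter> Es k K \<in> sets M" for k K by (rule sets.Int[OF Bs_M Es_M])
  have U_M: "U K \<in> sets M" for K unfolding U_def by (rule sets.finite_UN) (rule finite_lessThan, rule BE_M)
  have cl1: "emeasure M (Bs k \<inter> Es k K) \<le> ennreal c * emeasure M (Bs k)" for k K
  proof -
    have G: "indicator (Bs k) \<in> borel_measurable (F k)" using Bs_F by (rule borel_measurable_indicator)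
    have Lm: "(\<lambda>\<omega>. y - rw \<xi> k \<omega>) \<in> borel_measurable (F k)"
      using rw_F[OF order_refl, of k] by measurable
    have Hm: "(\<lambda>\<omega>. h y - rw \<xi> k \<omega>) \<in> borel_measurable (F k)"
      using rw_F[OF order_refl, of k] by measurable
    have Wm: "(\<lambda>\<omega>. 0) \<in> borel_measurable (F k)" by measurable
    have "emeasure M (Bs k \<inter> Es k K) = (\<integral>\<^sup>+\<omega>. indicator (Bs k \<inter> Es k K) \<omega> \<partial>M)"
      by (rule nn_integral_indicator[symmetric]) (rule BE_M)
    also have "\<dots> = (\<integral>\<^sup>+\<omega>. indicator (Bs k) \<omega> * (if evp \<xi> (y - rw \<xi> k \<omega>) (h y - rw \<xi> k \<omega>) k K 0 \<omega> then 1 else 0) \<partial>M)"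
      by (rule nn_integral_cong) (auto simp: indicator_def Bs_def Es_def)
    also have "\<dots> = (\<integral>\<^sup>+\<omega>. indicator (Bs k) \<omega> * V D K (y - rw \<xi> k \<omega>) (h y - rw \<xi> k \<omega>) 0 \<partial>M)"
      by (rule markov[where Wf="\<lambda>_. 0", OF G Lm Hm Wm])
    also have "\<dots> \<le> (\<integral>\<^sup>+\<omega>. ennreal c * indicator (Bs k) \<omega> \<partial>M)"
    proof (rule nn_integral_mono)
      fix \<omega> assume \<omega>: "\<omega> \<in> space M"
      show "indicator (Bs k) \<omega> * V D K (y - rw \<xi> k \<omega>) (h y - rw \<xi> k \<omega>) 0 \<le> ennreal c * indicator (Bs k) \<omega>"
      proof (cases "\<omega> \<in> Bs k")
        case False then show ?thesis by simp
      next
        case True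
        then have r: "rw \<xi> k \<omega> \<le> 0" using rw_0[of \<xi> \<omega>] unfolding Bs_def by force
        define L where "L = y - rw \<xi> k \<omega>"
        have L0: "0 \<le> L" "y \<le> L" using r y unfolding L_def by auto
        have hL: "h L \<le> h y - rw \<xi> k \<omega>"
          using h4[rule_format, OF y(1), of "- rw \<xi> k \<omega>"] r unfolding L_def by simp
        have "V D K L (h y - rw \<xi> k \<omega>) 0 \<le> emeasure M (A2 M \<xi> h (tau \<xi>) L)"
          by (rule Vbound[where h=h and L=L and K=K, OF L0(1) hL])
        also have "\<dots> = ennreal (measure M (A2 M \<xi> h (tau \<xi>) L))"
          using A2tau_sets by (simp add: emeasure_eq_measure)
        also have "\<dots> \<le> ennreal (d * Fbar M \<xi> L)"
          using d(2)[OF L0(2)] by (rule ennreal_leI)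
        also have "\<dots> \<le> ennreal c"
          unfolding c_def using Fbar_mono[OF L0(2)] d(1) by (intro ennreal_leI mult_left_mono)
        finally show ?thesis using True unfolding L_def by simp
      qed
    qed
    also have "\<dots> = ennreal c * emeasure M (Bs k)"
      using Bs_M by (rule nn_integral_cmult_indicator)
    finally show ?thesis .
  qed
  have cl2: "emeasure M (U K) \<le> ennreal c * ennreal Er" for K
  proof -
    have "emeasure M (U K) \<le> (\<Sum>k<K. emeasure M (Bs k \<inter> Es k K))"
      unfolding U_def by (rule emeasure_subadditive_finite) (rule finite_lessThan, rule image_subsetI, rule BE_M)
    also have "\<dots> \<le> (\<Sum>k<K. ennreal c * emeasure M (Sk k))"
    proof (rule sum_mono)
      fix k assume "k \<in> {..<K}"
      have "emeasure M (Bs k) \<le> emeasure M (Sk k)"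
        by (rule emeasure_mono[OF _ Sk_M]) (auto simp: Bs_def Sk_def)
      then show "emeasure M (Bs k \<inter> Es k K) \<le> ennreal c * emeasure M (Sk k)"
        using cl1[of k K] by (meson mult_left_mono order_trans zero_le)
    qed
    also have "\<dots> = ennreal c * (\<Sum>k<K. emeasure M (Sk k))" by (simp add: sum_distrib_left)
    also have "(\<Sum>k<K. emeasure M (Sk k)) = (\<integral>\<^sup>+\<omega>. (\<Sum>k<K. indicator (Sk k) \<omega>) \<partial>M)"
    proof -
      have "(\<integral>\<^sup>+\<omega>. (\<Sum>k<K. indicator (Sk k) \<omega>) \<partial>M) = (\<Sum>k<K. (\<integral>\<^sup>+\<omega>. indicator (Sk k) \<omega> \<partial>M))"
        by (rule nn_integral_sum) (rule borel_measurable_indicator[OF Sk_M])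
      also have "\<dots> = (\<Sum>k<K. emeasure M (Sk k))"
        by (rule sum.cong[OF refl]) (rule nn_integral_indicator[OF Sk_M])
      finally show ?thesis by (rule sym)
    qed
    also have "\<dots> \<le> (\<integral>\<^sup>+\<omega>. ennreal_of_enat (\<sigma> \<omega>) \<partial>M)"
    proof (rule nn_integral_mono)
      fix \<omega> assume \<omega>: "\<omega> \<in> space M"
      show "(\<Sum>k<K. indicator (Sk k) \<omega>) \<le> ennreal_of_enat (\<sigma> \<omega>)"
      proof (cases "\<sigma> \<omega>")
        case (enat s)
        have "(\<Sum>k<K. indicator (Sk k) \<omega>) = (\<Sum>k<K. if k < s then 1 else (0::ennreal))"
          using \<omega> enat by (intro sum.cong) (auto simp: Sk_def indicator_def)
        also have "\<dots> = of_nat (min K s)" by (rule sum_count)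
        also have "\<dots> \<le> of_nat s" by simp
        finally show ?thesis using enat by simp
      next
        case infinity then show ?thesis by simp
      qed
    qed
    finally show ?thesis using fm by (simp add: mult_left_mono)
  qed
  have inc: "incseq U"
  proof (rule incseq_SucI)
    fix K
    have "Es k K \<subseteq> Es k (Suc K)" for k unfolding Es_def by (rule Collect_mono) (auto intro: evp_mono simp del: evp.simps)
    then show "U K \<subseteq> U (Suc K)" unfolding U_def by fastforce
  qed
  have sub: "A2 M \<xi> h \<sigma> y \<subseteq> (\<Union>K. U K)"
  proof
    fix \<omega> assume \<omega>A: "\<omega> \<in> A2 M \<xi> h \<sigma> y"
    then obtain n where n: "\<omega> \<in> space M" "mu \<xi> y \<omega> = enat n" "enat n \<le> \<sigma> \<omega>" "h y < rw \<xi> (n - 1) \<omega>"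
      unfolding A2_def by blast
    obtain k where k: "k < n" "enat k < \<sigma> \<omega>" "\<forall>l\<le>k. rw \<xi> k \<omega> \<le> rw \<xi> l \<omega>"
      "pathp \<xi> (y - rw \<xi> k \<omega>) (h y - rw \<xi> k \<omega>) k 0 (n - k) \<omega>"
      using decomp[where h=h and \<sigma>=\<sigma> and y=y and \<xi>=\<xi> and \<omega>=\<omega> and n=n, OF y(2) n(2) n(3) n(4)] by blast
    have "evp \<xi> (y - rw \<xi> k \<omega>) (h y - rw \<xi> k \<omega>) k n 0 \<omega>"
      using evp_iff k(4) by (metis diff_le_self)
    then have "\<omega> \<in> Bs k \<inter> Es k n" using n(1) k unfolding Bs_def Es_def by blast
    then have "\<omega> \<in> U n" unfolding U_def using k(1) by blast
    then show "\<omega> \<in> (\<Union>K. U K)" by blast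
  qed
  have "emeasure M (\<Union>K. U K) = (SUP K. emeasure M (U K))"
    using SUP_emeasure_incseq[of U M, OF _ inc] U_M by (metis image_subsetI)
  also have "\<dots> \<le> ennreal c * ennreal Er" by (rule SUP_least) (rule cl2)
  finally have "emeasure M (\<Union>K. U K) \<le> ennreal (c * Er)" using c0 Er by (simp add: ennreal_mult)
  then have "measure M (\<Union>K. U K) \<le> c * Er"
    using U_M c0 Er by (simp add: emeasure_eq_measure ennreal_le_iff mult_nonneg_nonneg)
  moreover have "measure M (A2 M \<xi> h \<sigma> y) \<le> measure M (\<Union>K. U K)"
    by (rule finite_measure_mono[OF sub]) (rule sets.countable_UN, rule image_subsetI, rule U_M)
  ultimately show ?thesis unfolding c_def by simp
qed

end


lemma delta_nonneg: "0 \<le> delta M \<xi> h s x"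
proof -
  have "0 \<le> ereal (measure M (A2 M \<xi> h s x) / Fbar M \<xi> x)"
    by (simp add: Fbar_def)
  also have "\<dots> \<le> delta M \<xi> h s x" unfolding delta_def by (rule SUP_upper) simp
  finally show ?thesis .
qed

theorem lemma4:
  fixes M :: "'a measure" and \<xi> :: "nat \<Rightarrow> 'a \<Rightarrow> real" and h :: "real \<Rightarrow> real"
    and F :: "nat \<Rightarrow> 'a measure" and \<sigma> :: "'a \<Rightarrow> enat"
  assumes P: "prob_space M"
    and indep: "prob_space.indep_vars M (\<lambda>_. borel) \<xi> {1..}"
    and ident: "\<forall>n\<ge>1. distr M borel (\<xi> n) = distr M borel (\<xi> 1)"
    and integ: "integrable M (\<xi> 1)"
    and neg_mean: "(\<integral>\<omega>. \<xi> 1 \<omega> \<partial>M) < 0"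
    and Fbar_pos: "\<forall>x. Fbar M \<xi> x > 0"
    and long_tailed: "\<forall>c>0. ((\<lambda>x. Fbar M \<xi> (x - c) / Fbar M \<xi> x) \<longlongrightarrow> 1) at_top"
    and h1: "\<forall>x\<ge>0. 0 \<le> h x \<and> h x \<le> x / 2"
    and h2: "filterlim h at_top at_top"
    and h3: "((\<lambda>x. Fbar M \<xi> (x - h x) / Fbar M \<xi> x) \<longlongrightarrow> 1) at_top"
    and h4: "\<exists>x0. \<forall>x\<ge>x0. \<forall>t\<ge>0. h (x + t) \<le> h x + t"
    and delta_tau: "((\<lambda>x. delta M \<xi> h (tau \<xi>) x) \<longlongrightarrow> 0) at_top"
    and filt: "admissible_filtration M \<xi> F"
    and stop: "stopping_time_enat M F \<sigma>"
    and finite_mean: "(\<integral>\<^sup>+\<omega>. ennreal_of_enat (\<sigma> \<omega>) \<partial>M) < \<infinity>"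
  shows "((\<lambda>x. delta M \<xi> h \<sigma> x) \<longlongrightarrow> 0) at_top"

proof -
  interpret R: rwsetup M \<xi> F
    unfolding rwsetup_def rwsetup_axioms_def using P filt ident by blast
  obtain x0 where x0: "\<forall>x\<ge>x0. \<forall>t\<ge>0. h (x + t) \<le> h x + t" using h4 by blast
  define E where "E = (\<integral>\<^sup>+\<omega>. ennreal_of_enat (\<sigma> \<omega>) \<partial>M)"
  define Er where "Er = enn2real E"
  have Er0: "0 \<le> Er" unfolding Er_def by simp
  have EEr: "E = ennreal Er" unfolding Er_def using finite_mean unfolding E_def[symmetric]
    by (simp add: ennreal_enn2real_if)
  have ev: "eventually (\<lambda>x. delta M \<xi> h (tau \<xi>) x < 1) at_top"
    using order_tendstoD(2)[OF delta_tau] by simp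
  then obtain x1 where x1: "\<And>x. x \<ge> x1 \<Longrightarrow> delta M \<xi> h (tau \<xi>) x < 1"
    unfolding eventually_at_top_linorder by blast
  have key: "delta M \<xi> h \<sigma> x \<le> ereal Er * delta M \<xi> h (tau \<xi>) x"
    if x: "x \<ge> max x0 (max 0 x1)" for x
  proof -
    have "ereal (measure M (A2 M \<xi> h \<sigma> y) / Fbar M \<xi> y) \<le> ereal Er * delta M \<xi> h (tau \<xi>) x"
      if y: "y \<in> {x..}" for y
    proof -
      have yx: "x \<le> y" using y by simp
      have y0: "x0 \<le> y" "0 \<le> y" "x1 \<le> y" using x yx by auto
      define dy where "dy = delta M \<xi> h (tau \<xi>) y"
      have dy01: "0 \<le> dy" "dy < 1" unfolding dy_def using delta_nonneg x1[OF y0(3)] by auto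
      define d where "d = real_of_ereal dy"
      have dd: "dy = ereal d" unfolding d_def using dy01 by (cases dy) auto
      have d0: "0 \<le> d" using dy01 dd by simp
      have dL: "measure M (A2 M \<xi> h (tau \<xi>) L) \<le> d * Fbar M \<xi> L" if L: "y \<le> L" for L
      proof -
        have "ereal (measure M (A2 M \<xi> h (tau \<xi>) L) / Fbar M \<xi> L) \<le> dy"
          unfolding dy_def delta_def by (rule SUP_upper) (use L in simp)
        then have "measure M (A2 M \<xi> h (tau \<xi>) L) / Fbar M \<xi> L \<le> d" using dd by simp
        moreover have "0 < Fbar M \<xi> L" using Fbar_pos by blast
        ultimately show ?thesis by (simp add: divide_le_eq)
      qed
      have py: "measure M (A2 M \<xi> h \<sigma> y) \<le> d * Fbar M \<xi> y * Er"
        by (rule R.per_y[OF stop EEr[unfolded E_def] Er0 x0 y0(1) y0(2) d0 dL])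
      have fy: "0 < Fbar M \<xi> y" using Fbar_pos by blast
      have "measure M (A2 M \<xi> h \<sigma> y) / Fbar M \<xi> y \<le> Er * d"
        using py fy by (simp add: divide_le_eq algebra_simps)
      then have "ereal (measure M (A2 M \<xi> h \<sigma> y) / Fbar M \<xi> y) \<le> ereal Er * dy"
        using dd by simp
      also have "dy \<le> delta M \<xi> h (tau \<xi>) x"
        unfolding dy_def delta_def by (rule SUP_subset_mono) (use yx in auto)
      then have "ereal Er * dy \<le> ereal Er * delta M \<xi> h (tau \<xi>) x"
        by (rule ereal_mult_left_mono) (use Er0 in simp)
      finally show ?thesis .
    qed
    then show ?thesis unfolding delta_def[of M \<xi> h \<sigma>] by (rule SUP_least)
  qed
  have lim: "((\<lambda>x. ereal Er * delta M \<xi> h (tau \<xi>) x) \<longlongrightarrow> ereal Er * 0) at_top"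
    by (rule tendsto_cmult_ereal_general[OF delta_tau]) simp
  show ?thesis
  proof (rule tendsto_sandwich[of "\<lambda>_. 0" _ _ "\<lambda>x. ereal Er * delta M \<xi> h (tau \<xi>) x"])
    show "\<forall>\<^sub>F n in at_top. 0 \<le> delta M \<xi> h \<sigma> n" by (simp add: delta_nonneg)
    show "\<forall>\<^sub>F n in at_top. delta M \<xi> h \<sigma> n \<le> ereal Er * delta M \<xi> h (tau \<xi>) n"
      unfolding eventually_at_top_linorder using key by blast
    show "((\<lambda>_. 0) \<longlongrightarrow> (0::ereal)) at_top" by simp
    show "((\<lambda>x. ereal Er * delta M \<xi> h (tau \<xi>) x) \<longlongrightarrow> 0) at_top" using lim by simp
  qed
qed


end
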